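(* Let $\mathcal{A}\subset\mathbb{R}^n$ be a nonempty compact set, $\Xi\subseteq\mathbb{R}^n$, $V:\mathbb{R}^n\to\mathbb{R}_+$ and $\Psi:\mathbb{R}^n\rightrightarrows\mathbb{R}^n$, and assume one of the following two settings holds: (i) $\Xi$ is nonempty, closed and convex, $\mathcal{A}$ is convex, and $V(y)=\tfrac12\|y-\mathbf{P}_{\mathcal{A}}(y)\|^2$; (ii) $\Xi=\mathbb{R}^n$ and $V$ is continuously differentiable with locally Lipschitz gradient, positive definite and radially unbounded with respect to $\mathcal{A}$. Assume $\Psi$ is SPSP with respect to $V$ on $\Xi$, that for every $y\in\Xi$, $\Psi(y)$ is a singleton $\{s(y)\}$, and that for every $\sigma>0$ there exists $L>0$ such that $\|s(y_1)-s(y_2)\|\le L\|y_1-y_2\|$ for all $y_1,y_2\in\Xi\cap\bar B_\sigma(\mathcal{A})$. Then $\mathcal{A}$ is SPAS for the iterative method $y^+=\mathbf{P}_\Xi[y-\alpha s(y)]$ with parameter $\alpha>0$.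
   Context: $\|\cdot\|$ is Euclidean; $\mathbf{P}_S$ is the orthogonal projection onto a nonempty closed convex set $S$. For compact $S$ and $r>0$: $\bar B_r(S)=\{x:\|x-\mathbf{P}_S(x)\|\le r\}$, $B_r(S)=\{x:\|x-\mathbf{P}_S(x)\|<r\}$ (distance to $S$). A function $V$ is positive definite w.r.t. a closed set $S$ if $V=0$ on $S$ and $V>0$ off $S$; it is radially unbounded w.r.t. $S$ (on a set $\Xi$) if for every $B\in\mathbb{R}$ there is $r>0$ with $V(x)>B$ for all $x$ (in $\Xi$) outside $\bar B_r(S)$. SPSP: Let $V:\mathbb{R}^n\to\mathbb{R}_+$ be differentiable, positive definite and radially unbounded w.r.t. compact $\mathcal{A}$, and let $\Xi$ strictly contain $\mathcal{A}$ (every point of $\mathcal{A}$ has an open ball around it contained in $\Xi$). $\Psi$ is semiglobally, practically, strictly pseudogradient (SPSP) w.r.t. $V$ on $\Xi$ if there exist $\epsilon\ge0$, $b\ge0$ such that $\nabla V(y)^Ts\ge -b$ for all $y\in\Xi\cap\bar B_\epsilon(\mathcal{A})$, $s\in\Psi(y)$, and for every $\sigma>\epsilon$ there is a continuous $\phi_{\sigma,\epsilon}:\mathbb{R}^n\to\mathbb{R}$, positive on $\Xi\cap(\bar B_\sigma(\mathcal{A})\setminus B_\epsilon(\mathcal{A}))$ and radially unbounded w.r.t. $\mathcal{A}$ on $\Xi$, with $\nabla V(y)^Ts\ge\phi_{\sigma,\epsilon}(y)$ for all $y\in\Xi\cap(\bar B_\sigma(\mathcal{A})\setminus B_\epsilon(\mathcal{A}))$,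 $s\in\Psi(y)$. SPAS (for the iteration with parameter $\alpha$; statements below concern every sequence $(y(t))_{t\in\mathbb{N}}$ with $y(0)\in\Xi$, $y(t+1)=\mathbf{P}_\Xi[y(t)-\alpha s(y(t))]$): $\mathcal{A}$ is practically stable if for some $\check\rho_s>0$ and every $\rho_s>\check\rho_s$ there exist $\delta>0$ and a nonempty set $P_s\subset(0,\infty)$ such that whenever $\alpha\in P_s$ and $y(0)\in\bar B_\delta(\mathcal{A})\cap\Xi$, $y(t)\in\bar B_{\rho_s}(\mathcal{A})\cap\Xi$ for all $t$. A compact $S$ is uniformly attractive on compact $\Omega$ if for every $\varepsilon>0$ with $\bar B_\varepsilon(S)\cap\Xi\subset\Omega\cap\Xi$ there is $T\in\mathbb{N}$ such that $y(t)\in\bar B_\varepsilon(S)$ whenever $y(0)\in\Omega$ and $t\ge T$. $\mathcal{A}$ is semiglobally practically attractive if for some $\check\rho_a>0$ and all $\sigma>\rho_a>\check\rho_a$ there is a nonempty $P_a\subset(0,\infty)$ such that whenever $\alpha\in P_a$, $\bar B_{\rho_a}(\mathcal{A})$ is uniformly attractive on $\bar B_\sigma(\mathcal{A})$. $\mathcal{A}$ is SPAS (semiglobally practically asymptotically stable) if it is practically stable and semiglobally practically attractive. *)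

theory Defs
  imports "HOL-Analysis.Analysis"
begin

definition cnbhd :: "'a::euclidean_space set \<Rightarrow> real \<Rightarrow> 'a set" where
  "cnbhd S r = {x. infdist x S \<le> r}"

definition onbhd :: "'a::euclidean_space set \<Rightarrow> real \<Rightarrow> 'a set" where
  "onbhd S r = {x. infdist x S < r}"

definition pos_def_wrt :: "('a::euclidean_space \<Rightarrow> real) \<Rightarrow> 'a set \<Rightarrow> bool" where
  "pos_def_wrt V S \<longleftrightarrow> (\<forall>x\<in>S. V x = 0) \<and> (\<forall>x. x \<notin> S \<longrightarrow> V x > 0)"

definition rad_unbounded_on :: "('a::euclidean_space \<Rightarrow> real) \<Rightarrow> 'a set \<Rightarrow> 'a set \<Rightarrow> bool" where
  "rad_unbounded_on V S Xi \<longleftrightarrow>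
     (\<forall>B::real. \<exists>r>0. \<forall>x\<in>Xi. x \<notin> cnbhd S r \<longrightarrow> V x > B)"

definition strictly_contains :: "'a::euclidean_space set \<Rightarrow> 'a set \<Rightarrow> bool" where
  "strictly_contains Xi A \<longleftrightarrow> (\<forall>a\<in>A. \<exists>e>0. ball a e \<subseteq> Xi)"

text \<open>Semiglobal, practical, strict pseudogradient. The term grad V(y)^T s is the
  Frechet derivative of V at y applied to s.\<close>
definition SPSP :: "('a::euclidean_space \<Rightarrow> 'a set) \<Rightarrow> ('a \<Rightarrow> real) \<Rightarrow> 'a set \<Rightarrow> 'a set \<Rightarrow> bool" where
  "SPSP Psi V A Xi \<longleftrightarrow>
     (\<forall>y. V differentiable (at y)) \<and> pos_def_wrt V A \<and> rad_unbounded_on V A UNIV \<and>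
     strictly_contains Xi A \<and>
     (\<exists>\<epsilon>\<ge>0. \<exists>b\<ge>0.
        (\<forall>y\<in>Xi \<inter> cnbhd A \<epsilon>. \<forall>s\<in>Psi y. frechet_derivative V (at y) s \<ge> - b) \<and>
        (\<forall>\<sigma>>\<epsilon>. \<exists>\<phi>::'a \<Rightarrow> real.
           continuous_on UNIV \<phi> \<and>
           (\<forall>y\<in>Xi \<inter> (cnbhd A \<sigma> - onbhd A \<epsilon>). \<phi> y > 0) \<and>
           rad_unbounded_on \<phi> A Xi \<and>
           (\<forall>y\<in>Xi \<inter> (cnbhd A \<sigma> - onbhd A \<epsilon>). \<forall>s\<in>Psi y. frechet_derivative V (at y) s \<ge> \<phi> y)))"

definition is_traj :: "'a::euclidean_space set \<Rightarrow> ('a \<Rightarrow> 'a) \<Rightarrow> real \<Rightarrow> (nat \<Rightarrow> 'a) \<Rightarrow> bool" where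
  "is_traj Xi s \<alpha> y \<longleftrightarrow> y 0 \<in> Xi \<and> (\<forall>t. y (Suc t) = closest_point Xi (y t - \<alpha> *\<^sub>R s (y t)))"

definition practically_stable :: "'a::euclidean_space set \<Rightarrow> 'a set \<Rightarrow> ('a \<Rightarrow> 'a) \<Rightarrow> bool" where
  "practically_stable A Xi s \<longleftrightarrow>
     (\<exists>rho_c>0. \<forall>rho_s>rho_c. \<exists>\<delta>>0. \<exists>Ps. Ps \<noteq> {} \<and> Ps \<subseteq> {0<..} \<and>
        (\<forall>\<alpha>\<in>Ps. \<forall>y. is_traj Xi s \<alpha> y \<and> y 0 \<in> cnbhd A \<delta> \<inter> Xi \<longrightarrow>
            (\<forall>t. y t \<in> cnbhd A rho_s \<inter> Xi)))"

definition unif_attractive :: "'a::euclidean_space set \<Rightarrow> 'a set \<Rightarrow> 'a set \<Rightarrow> ('a \<Rightarrow> 'a) \<Rightarrow> real \<Rightarrow> bool" where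
  "unif_attractive S \<Omega> Xi s \<alpha> \<longleftrightarrow>
     (\<forall>\<epsilon>>0. cnbhd S \<epsilon> \<inter> Xi \<subseteq> \<Omega> \<inter> Xi \<longrightarrow>
        (\<exists>T::nat. \<forall>y. is_traj Xi s \<alpha> y \<and> y 0 \<in> \<Omega> \<longrightarrow> (\<forall>t\<ge>T. y t \<in> cnbhd S \<epsilon>)))"

definition semiglobally_practically_attractive :: "'a::euclidean_space set \<Rightarrow> 'a set \<Rightarrow> ('a \<Rightarrow> 'a) \<Rightarrow> bool" where
  "semiglobally_practically_attractive A Xi s \<longleftrightarrow>
     (\<exists>rho_c>0. \<forall>\<sigma> rho_a. \<sigma> > rho_a \<and> rho_a > rho_c \<longrightarrow>
        (\<exists>Pa. Pa \<noteq> {} \<and> Pa \<subseteq> {0<..} \<and>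
           (\<forall>\<alpha>\<in>Pa. unif_attractive (cnbhd A rho_a) (cnbhd A \<sigma>) Xi s \<alpha>)))"

definition SPAS :: "'a::euclidean_space set \<Rightarrow> 'a set \<Rightarrow> ('a \<Rightarrow> 'a) \<Rightarrow> bool" where
  "SPAS A Xi s \<longleftrightarrow> practically_stable A Xi s \<and> semiglobally_practically_attractive A Xi s"

end

theory Submission
  imports Defs
begin

lemma desc1:
  fixes A Xi :: "'a::euclidean_space set" and y h :: 'a and V :: "'a \<Rightarrow> real"
  assumes Acl: "closed A" and Ane: "A \<noteq> {}" and Xcv: "convex Xi" and Xcl: "closed Xi"
    and Xne: "Xi \<noteq> {}" and AX: "A \<subseteq> Xi"
    and Vdef: "V = (\<lambda>y. (1/2) * (norm (y - closest_point A y))\<^sup>2)"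
    and dif: "V differentiable (at y)"
  shows "V (closest_point Xi (y - \<alpha> *\<^sub>R h)) \<le> V y - \<alpha> * frechet_derivative V (at y) h + \<alpha>\<^sup>2 / 2 * (norm h)\<^sup>2"
proof -
  define g where "g = y - closest_point A y"
  define D where "D = frechet_derivative V (at y)"
  have quad: "V (y + k) \<le> V y + g \<bullet> k + (norm k)\<^sup>2 / 2" for k
  proof -
    have "closest_point A y \<in> A" using closest_point_in_set[OF Acl Ane] .
    then have "dist (y + k) (closest_point A (y + k)) \<le> dist (y + k) (closest_point A y)"
      using closest_point_le[OF Acl] by blast
    then have n1: "norm (y + k - closest_point A (y + k)) \<le> norm (g + k)"
      by (simp add: dist_norm g_def algebra_simps)
    have "(norm (y + k - closest_point A (y + k)))\<^sup>2 \<le> (norm (g + k))\<^sup>2"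
      using n1 by (simp add: power_mono)
    also have "(norm (g + k))\<^sup>2 = (norm g)\<^sup>2 + 2 * (g \<bullet> k) + (norm k)\<^sup>2"
      by (simp add: power2_norm_eq_inner inner_add inner_commute)
    finally show ?thesis unfolding Vdef g_def by simp
  qed
  have Dd: "(V has_derivative D) (at y)" using dif D_def frechet_derivative_works by blast
  have bl: "bounded_linear D" using Dd has_derivative_bounded_linear by blast
  have Dh: "D h = g \<bullet> h"
  proof -
    have c1: "((\<lambda>t::real. y + t *\<^sub>R h) has_derivative (\<lambda>t. t *\<^sub>R h)) (at 0)"
      by (auto intro!: derivative_eq_intros)
    have c2: "(V has_derivative D) (at ((\<lambda>t::real. y + t *\<^sub>R h) 0))" using Dd by simp
    have "((V \<circ> (\<lambda>t::real. y + t *\<^sub>R h)) has_derivative (D \<circ> (\<lambda>t. t *\<^sub>R h))) (at 0)"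
      by (rule diff_chain_at[OF c1 c2])
    moreover have "(D \<circ> (\<lambda>t. t *\<^sub>R h)) = (\<lambda>t. D h * t)"
      using linear_cmul[OF bounded_linear.linear[OF bl]] by (auto simp: fun_eq_iff)
    ultimately have d1: "((\<lambda>t. V (y + t *\<^sub>R h)) has_real_derivative D h) (at 0)"
      by (simp add: has_field_derivative_def o_def)
    have d2: "((\<lambda>t. V (y + t *\<^sub>R h) - V y - t * (g \<bullet> h) - t\<^sup>2 / 2 * (norm h)\<^sup>2) has_real_derivative (D h - g \<bullet> h)) (at 0)"
      using d1 by (auto intro!: derivative_eq_intros)
    have le: "\<forall>t. \<bar>0 - t\<bar> < 1 \<longrightarrow> V (y + t *\<^sub>R h) - V y - t * (g \<bullet> h) - t\<^sup>2 / 2 * (norm h)\<^sup>2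
       \<le> V (y + 0 *\<^sub>R h) - V y - 0 * (g \<bullet> h) - 0\<^sup>2 / 2 * (norm h)\<^sup>2"
    proof (intro allI impI)
      fix t :: real
      have "V (y + t *\<^sub>R h) \<le> V y + g \<bullet> (t *\<^sub>R h) + (norm (t *\<^sub>R h))\<^sup>2 / 2" by (rule quad)
      then show "V (y + t *\<^sub>R h) - V y - t * (g \<bullet> h) - t\<^sup>2 / 2 * (norm h)\<^sup>2
       \<le> V (y + 0 *\<^sub>R h) - V y - 0 * (g \<bullet> h) - 0\<^sup>2 / 2 * (norm h)\<^sup>2"
        by (simp add: power_mult_distrib)
    qed
    have "D h - g \<bullet> h = 0"
      by (rule DERIV_local_max[OF d2 _ le]) simp
    then show ?thesis by simp
  qed
  define z where "z = y - \<alpha> *\<^sub>R h"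
  have proj: "V (closest_point Xi z) \<le> V z"
  proof -
    define a where "a = closest_point A z"
    have aA: "a \<in> A" unfolding a_def using closest_point_in_set[OF Acl Ane] .
    have "dist (closest_point Xi z) (closest_point A (closest_point Xi z)) \<le> dist (closest_point Xi z) a"
      using closest_point_le[OF Acl aA] .
    also have "\<dots> = dist (closest_point Xi z) (closest_point Xi a)"
      using closest_point_self[of a Xi] aA AX by auto
    also have "\<dots> \<le> dist z a" by (rule closest_point_lipschitz[OF Xcv Xcl Xne])
    finally have "norm (closest_point Xi z - closest_point A (closest_point Xi z)) \<le> norm (z - closest_point A z)"
      by (simp add: dist_norm a_def)
    then show ?thesis unfolding Vdef by (simp add: power_mono)
  qed
  have "V z \<le> V y + g \<bullet> ((-\<alpha>) *\<^sub>R h) + (norm ((-\<alpha>) *\<^sub>R h))\<^sup>2 / 2"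
    using quad[of "(-\<alpha>) *\<^sub>R h"] by (simp add: z_def)
  also have "\<dots> = V y - \<alpha> * D h + \<alpha>\<^sup>2 / 2 * (norm h)\<^sup>2"
    by (simp add: Dh power_mult_distrib)
  finally show ?thesis using proj by (simp add: z_def D_def)
qed

lemma desc2:
  fixes V :: "'a::euclidean_space \<Rightarrow> real" and gV :: "'a \<Rightarrow> 'a"
  assumes der: "\<forall>y. (V has_derivative (\<lambda>h. gV y \<bullet> h)) (at y)"
    and lip: "Lg-lipschitz_on K gV"
    and seg: "\<forall>t. 0 \<le> t \<and> t \<le> \<alpha> \<longrightarrow> y - t *\<^sub>R h \<in> K" and a0: "\<alpha> \<ge> 0"
  shows "V (y - \<alpha> *\<^sub>R h) \<le> V y - \<alpha> * (gV y \<bullet> h) + \<alpha>\<^sup>2 * Lg * (norm h)\<^sup>2"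
proof -
  have L0: "Lg \<ge> 0" using lip lipschitz_on_nonneg by blast
  have d: "((\<lambda>t. V (y - t *\<^sub>R h)) has_derivative (\<lambda>d. d * (gV (y - x *\<^sub>R h) \<bullet> (-h)))) (at x within {0..\<alpha>})" for x
  proof -
    have c1: "((\<lambda>t::real. y - t *\<^sub>R h) has_derivative (\<lambda>t. - (t *\<^sub>R h))) (at x)"
      by (auto intro!: derivative_eq_intros)
    have c2: "(V has_derivative (\<lambda>k. gV (y - x *\<^sub>R h) \<bullet> k)) (at ((\<lambda>t::real. y - t *\<^sub>R h) x))"
      using der by simp
    have "((V \<circ> (\<lambda>t::real. y - t *\<^sub>R h)) has_derivative ((\<lambda>k. gV (y - x *\<^sub>R h) \<bullet> k) \<circ> (\<lambda>t. - (t *\<^sub>R h)))) (at x)"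
      by (rule diff_chain_at[OF c1 c2])
    then have "((\<lambda>t. V (y - t *\<^sub>R h)) has_derivative (\<lambda>d. d * (gV (y - x *\<^sub>R h) \<bullet> (-h)))) (at x)"
      by (simp add: o_def inner_minus_right)
    then show ?thesis by (rule has_derivative_at_withinI)
  qed
  obtain x where x: "x \<in> {0..\<alpha>}" and eq: "V (y - \<alpha> *\<^sub>R h) - V (y - 0 *\<^sub>R h) = (\<alpha> - 0) * (gV (y - x *\<^sub>R h) \<bullet> (-h))"
    using mvt_very_simple[OF a0, of "\<lambda>t. V (y - t *\<^sub>R h)", OF d] by blast
  have yK: "y \<in> K" using seg a0 by (metis order_refl scale_zero_left diff_zero)
  have xK: "y - x *\<^sub>R h \<in> K" using seg x by auto
  have "norm (gV y - gV (y - x *\<^sub>R h)) \<le> Lg * norm (x *\<^sub>R h)"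
    using lipschitz_onD[OF lip yK xK] by (simp add: dist_norm)
  also have "\<dots> \<le> Lg * (\<alpha> * norm h)" using x L0 by (auto intro!: mult_left_mono mult_right_mono)
  finally have n: "norm (gV y - gV (y - x *\<^sub>R h)) \<le> Lg * (\<alpha> * norm h)" .
  have "(gV y - gV (y - x *\<^sub>R h)) \<bullet> h \<le> norm (gV y - gV (y - x *\<^sub>R h)) * norm h"
    by (rule norm_cauchy_schwarz)
  also have "\<dots> \<le> Lg * (\<alpha> * norm h) * norm h" using n by (simp add: mult_right_mono)
  finally have cs: "(gV y - gV (y - x *\<^sub>R h)) \<bullet> h \<le> Lg * \<alpha> * (norm h)\<^sup>2"
    by (simp add: power2_eq_square mult_ac)
  have "V (y - \<alpha> *\<^sub>R h) = V y - \<alpha> * (gV y \<bullet> h) + \<alpha> * ((gV y - gV (y - x *\<^sub>R h)) \<bullet> h)"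
    using eq by (simp add: inner_diff_left algebra_simps)
  also have "\<dots> \<le> V y - \<alpha> * (gV y \<bullet> h) + \<alpha> * (Lg * \<alpha> * (norm h)\<^sup>2)"
    using cs a0 by (simp add: mult_left_mono)
  finally show ?thesis by (simp add: power2_eq_square mult_ac)
qed

lemma cnbhd_near:
  fixes A :: "'a::euclidean_space set"
  assumes "compact A" "A \<noteq> {}" "infdist x A \<le> R"
  shows "\<exists>a\<in>A. dist x a \<le> R"
  using infdist_attains_inf[OF compact_imp_closed[OF assms(1)] assms(2), of x] assms(3) by metis

lemma cnbhd_compact:
  fixes A :: "'a::euclidean_space set"
  assumes "compact A" "A \<noteq> {}"
  shows "compact (cnbhd A R)"
proof -
  have cl: "closed (cnbhd A R)" unfolding cnbhd_def
    by (intro closed_Collect_le continuous_on_infdist continuous_on_id continuous_on_const)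
  obtain B where B: "\<forall>a\<in>A. norm a \<le> B"
    using compact_imp_bounded[OF assms(1)] bounded_iff by blast
  have "\<forall>x\<in>cnbhd A R. norm x \<le> B + R"
  proof
    fix x assume "x \<in> cnbhd A R"
    then obtain a where a: "a \<in> A" "dist x a \<le> R" using cnbhd_near[OF assms] unfolding cnbhd_def by auto
    have "norm x \<le> norm a + dist x a" by (metis dist_norm norm_triangle_sub add.commute)
    then show "norm x \<le> B + R" using a B by fastforce
  qed
  then have "bounded (cnbhd A R)" using bounded_iff by blast
  then show ?thesis using cl by (simp add: compact_eq_bounded_closed)
qed

lemma lip_compact:
  fixes gV :: "'a::euclidean_space \<Rightarrow> 'a"
  assumes loc: "\<forall>x. \<exists>e>0. \<exists>L. L-lipschitz_on (ball x e) gV" and K: "compact K"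
  shows "\<exists>L. L-lipschitz_on K gV"
proof -
  have ll: "local_lipschitz {0::real} K (\<lambda>_. gV)"
  proof (rule local_lipschitzI)
    fix t x assume "t \<in> {0::real}" "x \<in> K"
    obtain e L where e: "e > 0" "L-lipschitz_on (ball x e) gV" using loc by blast
    have "L-lipschitz_on (cball x (e/2) \<inter> K) gV"
      by (rule lipschitz_on_subset[OF e(2)]) (use e in auto)
    then show "\<exists>u>0. \<exists>L. \<forall>t\<in>cball t u \<inter> {0}. L-lipschitz_on (cball x u \<inter> K) gV"
      using e by (intro exI[of _ "e/2"]) auto
  qed
  obtain L where "\<And>t. t \<in> {0::real} \<Longrightarrow> L-lipschitz_on K gV"
    using local_lipschitz_compact_implies_lipschitz[OF ll K compact_sing] by auto
  then show ?thesis by blast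
qed

theorem theorem3:
  fixes A Xi :: "'a::euclidean_space set"
    and V :: "'a \<Rightarrow> real" and Psi :: "'a \<Rightarrow> 'a set" and s :: "'a \<Rightarrow> 'a"
  assumes A_ne: "A \<noteq> {}" and A_cpt: "compact A"
    and V_nonneg: "\<forall>x. V x \<ge> 0"
    and settings:
      "(Xi \<noteq> {} \<and> closed Xi \<and> convex Xi \<and> convex A \<and>
          V = (\<lambda>y. (1/2) * (norm (y - closest_point A y))\<^sup>2))
       \<or> (Xi = UNIV \<and>
          (\<exists>gV::'a \<Rightarrow> 'a. (\<forall>y. (V has_derivative (\<lambda>h. gV y \<bullet> h)) (at y)) \<and>
             continuous_on UNIV gV \<and>
             (\<forall>x. \<exists>e>0. \<exists>L. L-lipschitz_on (ball x e) gV)) \<and>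
          pos_def_wrt V A \<and> rad_unbounded_on V A UNIV)"
    and spsp: "SPSP Psi V A Xi"
    and single: "\<forall>y\<in>Xi. Psi y = {s y}"
    and lip: "\<forall>\<sigma>>0. \<exists>L>0. \<forall>y1\<in>Xi \<inter> cnbhd A \<sigma>. \<forall>y2\<in>Xi \<inter> cnbhd A \<sigma>.
                 norm (s y1 - s y2) \<le> L * norm (y1 - y2)"
  shows "SPAS A Xi s"
proof -
  have Vdif: "\<forall>y. V differentiable (at y)" and radV: "rad_unbounded_on V A UNIV"
    and sc: "strictly_contains Xi A"
    using spsp unfolding SPSP_def by auto
  obtain \<epsilon> b where e0: "\<epsilon> \<ge> 0" and b0: "b \<ge> 0"
    and inner: "\<forall>y\<in>Xi \<inter> cnbhd A \<epsilon>. \<forall>z\<in>Psi y. frechet_derivative V (at y) z \<ge> - b"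
    and outer: "\<forall>\<sigma>>\<epsilon>. \<exists>\<phi>::'a \<Rightarrow> real. continuous_on UNIV \<phi> \<and>
           (\<forall>y\<in>Xi \<inter> (cnbhd A \<sigma> - onbhd A \<epsilon>). \<phi> y > 0) \<and>
           rad_unbounded_on \<phi> A Xi \<and>
           (\<forall>y\<in>Xi \<inter> (cnbhd A \<sigma> - onbhd A \<epsilon>). \<forall>z\<in>Psi y. frechet_derivative V (at y) z \<ge> \<phi> y)"
    using spsp[unfolded SPSP_def, THEN conjunct2, THEN conjunct2, THEN conjunct2, THEN conjunct2]
    by (elim exE conjE) (rule that, assumption+)
  have AXi: "A \<subseteq> Xi"
  proof
    fix a assume "a \<in> A"
    then obtain e where "e > 0" "ball a e \<subseteq> Xi" using sc unfolding strictly_contains_def by blast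
    then show "a \<in> Xi" by auto
  qed
  have XiNE: "Xi \<noteq> {}" using AXi A_ne by auto
  have XiC: "closed Xi" using settings by auto
  have cpXi: "\<And>z. closest_point Xi z \<in> Xi" using closest_point_in_set[OF XiC XiNE] .
  have Acl: "closed A" using A_cpt compact_imp_closed by blast
  have Vcont: "continuous_on UNIV V"
    using Vdif by (meson continuous_at_imp_continuous_on differentiable_imp_continuous_within)
  have idn: "\<And>y. infdist y A \<ge> 0" by (rule infdist_nonneg)
  have Vbnd: "\<exists>W\<ge>0. \<forall>y. infdist y A \<le> R \<longrightarrow> V y \<le> W" for R
  proof (cases "R < 0")
    case True
    then have "\<forall>y. \<not> infdist y A \<le> R" using idn by (meson le_less_trans not_le)
    then show ?thesis by auto
  next
    case False
    have "A \<subseteq> cnbhd A R" using False by (auto simp: cnbhd_def)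
    then have ne: "cnbhd A R \<noteq> {}" using A_ne by auto
    obtain x where "x \<in> cnbhd A R" "\<forall>y\<in>cnbhd A R. V y \<le> V x"
      using continuous_attains_sup[OF cnbhd_compact[OF A_cpt A_ne] ne continuous_on_subset[OF Vcont]] by blast
    then show ?thesis using V_nonneg unfolding cnbhd_def by (intro exI[of _ "V x"]) auto
  qed
  have Rof: "\<exists>R>0. \<forall>y. V y \<le> c \<longrightarrow> infdist y A \<le> R" for c
  proof -
    obtain r where "r > 0" "\<forall>x. x \<notin> cnbhd A r \<longrightarrow> V x > c"
      using radV unfolding rad_unbounded_on_def by blast
    then show ?thesis
    proof (intro exI[of _ r] conjI allI impI)
      fix y assume r: "r > 0" "\<forall>x. x \<notin> cnbhd A r \<longrightarrow> V x > c" and Vy: "V y \<le> c"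
      show "infdist y A \<le> r"
      proof (rule ccontr)
        assume "\<not> infdist y A \<le> r"
        then have "y \<notin> cnbhd A r" by (simp add: cnbhd_def)
        then show False using r Vy by fastforce
      qed
    qed simp
  qed
  have sbnd: "\<exists>M\<ge>0. \<forall>y\<in>Xi. infdist y A \<le> R \<longrightarrow> norm (s y) \<le> M" if R0: "R > 0" for R
  proof -
    obtain L where L: "L > 0" "\<forall>y1\<in>Xi \<inter> cnbhd A R. \<forall>y2\<in>Xi \<inter> cnbhd A R. norm (s y1 - s y2) \<le> L * norm (y1 - y2)"
      using lip R0 by blast
    obtain a0 where a0: "a0 \<in> A" using A_ne by blast
    have a0X: "a0 \<in> Xi \<inter> cnbhd A R" using a0 AXi R0 by (auto simp: cnbhd_def)
    obtain B where B: "\<forall>a\<in>A. norm a \<le> B"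
      using compact_imp_bounded[OF A_cpt] bounded_iff by blast
    have B0: "B \<ge> 0" using B a0 norm_ge_zero order.trans by blast
    have "norm (s y) \<le> norm (s a0) + L * (B + R + norm a0)" if yh: "y \<in> Xi" "infdist y A \<le> R" for y
    proof -
      obtain a where a: "a \<in> A" "dist y a \<le> R" using cnbhd_near[OF A_cpt A_ne yh(2)] by blast
      have "norm y \<le> norm a + dist y a" by (metis dist_norm norm_triangle_sub add.commute)
      then have ny: "norm y \<le> B + R" using a B by fastforce
      have "norm (s y - s a0) \<le> L * norm (y - a0)" using L(2) a0X yh by (auto simp: cnbhd_def)
      also have "\<dots> \<le> L * (B + R + norm a0)"
        using ny L(1) norm_triangle_ineq4[of y a0] by (intro mult_left_mono) auto
      finally show ?thesis using norm_triangle_sub[of "s y" "s a0"] by linarith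
    qed
    moreover have "0 \<le> norm (s a0) + L * (B + R + norm a0)"
      using L(1) B0 R0 by (intro add_nonneg_nonneg mult_nonneg_nonneg) auto
    ultimately show ?thesis by blast
  qed
  have desc: "\<exists>C\<ge>0. \<forall>\<alpha> y. 0 < \<alpha> \<and> \<alpha> \<le> 1 \<and> y \<in> Xi \<and> infdist y A \<le> R \<longrightarrow>
      V (closest_point Xi (y - \<alpha> *\<^sub>R s y)) \<le> V y - \<alpha> * frechet_derivative V (at y) (s y) + \<alpha>\<^sup>2 * C"
    if R0: "R > 0" for R
  proof -
    obtain M where M: "M \<ge> 0" "\<forall>y\<in>Xi. infdist y A \<le> R \<longrightarrow> norm (s y) \<le> M" using sbnd R0 by blast
    from settings show ?thesis
    proof
      assume S1: "Xi \<noteq> {} \<and> closed Xi \<and> convex Xi \<and> convex A \<and>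
          V = (\<lambda>y. (1/2) * (norm (y - closest_point A y))\<^sup>2)"
      show ?thesis
      proof (intro exI[of _ "M\<^sup>2 / 2"] conjI allI impI)
        show "0 \<le> M\<^sup>2 / 2" by simp
        fix \<alpha> :: real and y assume h: "0 < \<alpha> \<and> \<alpha> \<le> 1 \<and> y \<in> Xi \<and> infdist y A \<le> R"
        have "V (closest_point Xi (y - \<alpha> *\<^sub>R s y)) \<le> V y - \<alpha> * frechet_derivative V (at y) (s y) + \<alpha>\<^sup>2 / 2 * (norm (s y))\<^sup>2"
          by (rule desc1[OF Acl A_ne _ XiC XiNE AXi]) (use S1 Vdif in auto)
        moreover have "(norm (s y))\<^sup>2 \<le> M\<^sup>2" using M h by (simp add: power_mono)
        then have "\<alpha>\<^sup>2 / 2 * (norm (s y))\<^sup>2 \<le> \<alpha>\<^sup>2 / 2 * M\<^sup>2" by (intro mult_left_mono) auto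
        ultimately show "V (closest_point Xi (y - \<alpha> *\<^sub>R s y)) \<le> V y - \<alpha> * frechet_derivative V (at y) (s y) + \<alpha>\<^sup>2 * (M\<^sup>2 / 2)"
          by simp
      qed
    next
      assume S2: "Xi = UNIV \<and>
          (\<exists>gV::'a \<Rightarrow> 'a. (\<forall>y. (V has_derivative (\<lambda>h. gV y \<bullet> h)) (at y)) \<and>
             continuous_on UNIV gV \<and>
             (\<forall>x. \<exists>e>0. \<exists>L. L-lipschitz_on (ball x e) gV)) \<and>
          pos_def_wrt V A \<and> rad_unbounded_on V A UNIV"
      then obtain gV :: "'a \<Rightarrow> 'a" where gd: "\<forall>y. (V has_derivative (\<lambda>h. gV y \<bullet> h)) (at y)"
        and gl: "\<forall>x. \<exists>e>0. \<exists>L. L-lipschitz_on (ball x e) gV" and XU: "Xi = UNIV" by blast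
      obtain Lg where Lg: "Lg-lipschitz_on (cnbhd A (R + M)) gV"
        using lip_compact[OF gl cnbhd_compact[OF A_cpt A_ne]] by blast
      have Lg0: "Lg \<ge> 0" using Lg lipschitz_on_nonneg by blast
      show ?thesis
      proof (intro exI[of _ "Lg * M\<^sup>2"] conjI allI impI)
        show "0 \<le> Lg * M\<^sup>2" using Lg0 by simp
        fix \<alpha> :: real and y assume h: "0 < \<alpha> \<and> \<alpha> \<le> 1 \<and> y \<in> Xi \<and> infdist y A \<le> R"
        have ns: "norm (s y) \<le> M" using M h by blast
        have seg: "\<forall>t. 0 \<le> t \<and> t \<le> \<alpha> \<longrightarrow> y - t *\<^sub>R s y \<in> cnbhd A (R + M)"
        proof (intro allI impI)
          fix t assume t: "0 \<le> t \<and> t \<le> \<alpha>"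
          have "infdist (y - t *\<^sub>R s y) A \<le> infdist y A + dist (y - t *\<^sub>R s y) y" by (rule infdist_triangle)
          also have "dist (y - t *\<^sub>R s y) y = t * norm (s y)" using t by (simp add: dist_norm)
          also have "t * norm (s y) \<le> 1 * M" using t h ns by (intro mult_mono) auto
          finally show "y - t *\<^sub>R s y \<in> cnbhd A (R + M)" using h by (auto simp: cnbhd_def)
        qed
        have fd: "frechet_derivative V (at y) = (\<lambda>h. gV y \<bullet> h)" using frechet_derivative_at gd by metis
        have "V (y - \<alpha> *\<^sub>R s y) \<le> V y - \<alpha> * (gV y \<bullet> s y) + \<alpha>\<^sup>2 * Lg * (norm (s y))\<^sup>2"
          using desc2[OF gd Lg seg] h by simp
        moreover have "(norm (s y))\<^sup>2 \<le> M\<^sup>2" using ns by (simp add: power_mono)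
        then have "\<alpha>\<^sup>2 * Lg * (norm (s y))\<^sup>2 \<le> \<alpha>\<^sup>2 * Lg * M\<^sup>2" using Lg0 by (intro mult_left_mono) auto
        moreover have "closest_point Xi (y - \<alpha> *\<^sub>R s y) = y - \<alpha> *\<^sub>R s y"
          using XU closest_point_self[of _ UNIV] by simp
        ultimately show "V (closest_point Xi (y - \<alpha> *\<^sub>R s y)) \<le> V y - \<alpha> * frechet_derivative V (at y) (s y) + \<alpha>\<^sup>2 * (Lg * M\<^sup>2)"
          using fd by (simp add: mult.assoc)
      qed
    qed
  qed
  obtain W where W0: "W \<ge> 0" and W: "\<forall>y. infdist y A \<le> \<epsilon> + 1 \<longrightarrow> V y \<le> W"
    using Vbnd by blast
  define c0 where "c0 = W + 1"
  have key: "\<exists>\<alpha>0>0. \<exists>\<kappa>>0. \<forall>\<alpha>. 0 < \<alpha> \<and> \<alpha> \<le> \<alpha>0 \<longrightarrow> (\<forall>y\<in>Xi. V y \<le> c \<longrightarrow>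
        (infdist y A \<le> \<epsilon> \<longrightarrow> V (closest_point Xi (y - \<alpha> *\<^sub>R s y)) \<le> c0) \<and>
        (infdist y A > \<epsilon> \<longrightarrow> V (closest_point Xi (y - \<alpha> *\<^sub>R s y)) \<le> V y - \<alpha> * \<kappa>))" for c
  proof -
    obtain R0 where R0: "R0 > 0" "\<forall>y. V y \<le> c \<longrightarrow> infdist y A \<le> R0" using Rof by blast
    define R where "R = max R0 (\<epsilon> + 1)"
    have Rpos: "R > 0" and Re: "R > \<epsilon>" and RR0: "R0 \<le> R" using R0 e0 by (auto simp: R_def)
    obtain C where C0: "C \<ge> 0" and C: "\<forall>\<alpha> y. 0 < \<alpha> \<and> \<alpha> \<le> 1 \<and> y \<in> Xi \<and> infdist y A \<le> R \<longrightarrow>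
      V (closest_point Xi (y - \<alpha> *\<^sub>R s y)) \<le> V y - \<alpha> * frechet_derivative V (at y) (s y) + \<alpha>\<^sup>2 * C"
      using desc[OF Rpos] by blast
    obtain \<phi> :: "'a \<Rightarrow> real" where \<phi>c: "continuous_on UNIV \<phi>"
      and \<phi>p: "\<forall>y\<in>Xi \<inter> (cnbhd A R - onbhd A \<epsilon>). \<phi> y > 0"
      and \<phi>d: "\<forall>y\<in>Xi \<inter> (cnbhd A R - onbhd A \<epsilon>). \<forall>z\<in>Psi y. frechet_derivative V (at y) z \<ge> \<phi> y"
      using outer[rule_format, OF Re] by blast
    define S where "S = Xi \<inter> (cnbhd A R - onbhd A \<epsilon>)"
    have Seq: "S = cnbhd A R \<inter> (Xi \<inter> {x. \<epsilon> \<le> infdist x A})"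
      by (auto simp: S_def onbhd_def cnbhd_def)
    have "closed {x. \<epsilon> \<le> infdist x A}"
      by (intro closed_Collect_le continuous_on_infdist continuous_on_id continuous_on_const)
    then have Scpt: "compact S" unfolding Seq
      by (intro compact_Int_closed cnbhd_compact[OF A_cpt A_ne] closed_Int XiC)
    obtain \<phi>m where \<phi>m0: "\<phi>m > 0" and \<phi>m: "\<forall>y\<in>S. \<phi> y \<ge> \<phi>m"
    proof (cases "S = {}")
      case True then show ?thesis using that[of 1] by auto
    next
      case False
      obtain x0 where "x0 \<in> S" "\<forall>y\<in>S. \<phi> x0 \<le> \<phi> y"
        using continuous_attains_inf[OF Scpt False continuous_on_subset[OF \<phi>c]] by blast
      then show ?thesis using that[of "\<phi> x0"] \<phi>p unfolding S_def by auto
    qed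
    define \<alpha>0 where "\<alpha>0 = min 1 (min (1 / (b + C + 1)) (\<phi>m / (2 * (C + 1))))"
    have \<alpha>0pos: "\<alpha>0 > 0" using b0 C0 \<phi>m0 by (auto simp: \<alpha>0_def)
    show ?thesis
    proof (rule exI[of _ \<alpha>0], rule conjI[OF \<alpha>0pos], rule exI[of _ "\<phi>m / 2"], intro conjI allI impI ballI)
      show "\<phi>m / 2 > 0" using \<phi>m0 by simp
      fix \<alpha> :: real and y assume ah: "0 < \<alpha> \<and> \<alpha> \<le> \<alpha>0" and yX: "y \<in> Xi" and Vy: "V y \<le> c"
      have a1: "\<alpha> \<le> 1" using ah by (simp add: \<alpha>0_def)
      have a2: "\<alpha> \<le> 1 / (b + C + 1)" using ah by (simp add: \<alpha>0_def)
      have a3: "\<alpha> \<le> \<phi>m / (2 * (C + 1))" using ah by (simp add: \<alpha>0_def)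
      have apos: "\<alpha> > 0" using ah by simp
      have hR: "infdist y A \<le> R" using R0 RR0 Vy by fastforce
      have Cy: "V (closest_point Xi (y - \<alpha> *\<^sub>R s y)) \<le> V y - \<alpha> * frechet_derivative V (at y) (s y) + \<alpha>\<^sup>2 * C"
        using C apos a1 yX hR by blast
      have sy: "s y \<in> Psi y" using single yX by auto
      have sq: "\<alpha>\<^sup>2 * C \<le> \<alpha> * C" using a1 apos C0
        by (simp add: power2_eq_square mult_right_mono)
      {
        assume "infdist y A \<le> \<epsilon>"
        then have D: "frechet_derivative V (at y) (s y) \<ge> - b" and Vw: "V y \<le> W"
          using inner sy yX W by (auto simp: cnbhd_def)
        have "- \<alpha> * frechet_derivative V (at y) (s y) \<le> \<alpha> * b"
          using mult_left_mono[OF D, of \<alpha>] apos by simp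
        moreover have "\<alpha> * (b + C + 1) \<le> 1" using a2 b0 C0 by (simp add: le_divide_eq mult.commute)
        then have "\<alpha> * b + \<alpha> * C + \<alpha> \<le> 1" by (simp add: algebra_simps)
        ultimately show "V (closest_point Xi (y - \<alpha> *\<^sub>R s y)) \<le> c0"
          using Cy sq Vw apos unfolding c0_def by linarith
      }
      {
        assume dy: "infdist y A > \<epsilon>"
        have yS: "y \<in> S" using yX hR dy by (auto simp: S_def cnbhd_def onbhd_def)
        then have D: "frechet_derivative V (at y) (s y) \<ge> \<phi>m"
          using \<phi>d \<phi>m sy unfolding S_def by (meson order.trans)
        have "\<alpha> * \<phi>m \<le> \<alpha> * frechet_derivative V (at y) (s y)"
          using mult_left_mono[OF D, of \<alpha>] apos by simp
        moreover have "\<alpha> * (2 * (C + 1)) \<le> \<phi>m" using a3 C0 by (simp add: le_divide_eq mult.commute)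
        then have "\<alpha> * C \<le> \<phi>m / 2" using apos by (simp add: algebra_simps)
        then have "\<alpha> * (\<alpha> * C) \<le> \<alpha> * (\<phi>m / 2)" using apos by (simp add: mult_left_mono)
        then have "\<alpha>\<^sup>2 * C \<le> \<alpha> * (\<phi>m / 2)" by (simp add: power2_eq_square mult.assoc)
        ultimately show "V (closest_point Xi (y - \<alpha> *\<^sub>R s y)) \<le> V y - \<alpha> * (\<phi>m / 2)"
          using Cy by (simp add: algebra_simps)
      }
    qed
  qed
  obtain \<rho>c where \<rho>c: "\<rho>c > 0" "\<forall>y. V y \<le> c0 \<longrightarrow> infdist y A \<le> \<rho>c" using Rof by blast
  have traj: "\<forall>t. y t \<in> Xi \<and> (V (y t) \<le> c0 \<or> V (y t) \<le> c - real t * (\<alpha> * \<kappa>))"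
    if c0c: "c0 \<le> c" and ap: "0 < \<alpha>" and kp: "\<kappa> > 0"
      and step: "\<forall>y\<in>Xi. V y \<le> c \<longrightarrow>
        (infdist y A \<le> \<epsilon> \<longrightarrow> V (closest_point Xi (y - \<alpha> *\<^sub>R s y)) \<le> c0) \<and>
        (infdist y A > \<epsilon> \<longrightarrow> V (closest_point Xi (y - \<alpha> *\<^sub>R s y)) \<le> V y - \<alpha> * \<kappa>)"
      and tr: "is_traj Xi s \<alpha> y" and y0: "V (y 0) \<le> c"
    for c \<alpha> \<kappa> y
  proof
    fix t show "y t \<in> Xi \<and> (V (y t) \<le> c0 \<or> V (y t) \<le> c - real t * (\<alpha> * \<kappa>))"
    proof (induction t)
      case 0 then show ?case using tr y0 by (simp add: is_traj_def)
    next
      case (Suc t)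
      have ys: "y (Suc t) = closest_point Xi (y t - \<alpha> *\<^sub>R s (y t))" using tr by (simp add: is_traj_def)
      have ak: "\<alpha> * \<kappa> > 0" using ap kp by simp
      have "real t * (\<alpha> * \<kappa>) \<ge> 0" using ak by simp
      then have Vt: "V (y t) \<le> c" using Suc.IH c0c by linarith
      have st: "(infdist (y t) A \<le> \<epsilon> \<longrightarrow> V (y (Suc t)) \<le> c0) \<and>
        (infdist (y t) A > \<epsilon> \<longrightarrow> V (y (Suc t)) \<le> V (y t) - \<alpha> * \<kappa>)"
        using step Suc.IH Vt ys by auto
      have "V (y (Suc t)) \<le> c0 \<or> V (y (Suc t)) \<le> c - real (Suc t) * (\<alpha> * \<kappa>)"
      proof (cases "infdist (y t) A \<le> \<epsilon>")
        case True then show ?thesis using st by auto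
      next
        case False
        then have "V (y (Suc t)) \<le> V (y t) - \<alpha> * \<kappa>" using st by auto
        then show ?thesis using Suc.IH ak by (auto simp: algebra_simps)
      qed
      then show ?case using ys cpXi by simp
    qed
  qed
  have Wc0: "W \<le> c0" by (simp add: c0_def)
  have PS: "practically_stable A Xi s"
    unfolding practically_stable_def
  proof (rule exI[of _ \<rho>c], rule conjI[OF \<rho>c(1)], intro allI impI)
    fix \<rho>s assume \<rho>s: "\<rho>s > \<rho>c"
    obtain \<alpha>0 \<kappa> where a0: "\<alpha>0 > 0" "\<kappa> > 0" and k: "\<forall>\<alpha>. 0 < \<alpha> \<and> \<alpha> \<le> \<alpha>0 \<longrightarrow> (\<forall>y\<in>Xi. V y \<le> c0 \<longrightarrow>
        (infdist y A \<le> \<epsilon> \<longrightarrow> V (closest_point Xi (y - \<alpha> *\<^sub>R s y)) \<le> c0) \<and>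
        (infdist y A > \<epsilon> \<longrightarrow> V (closest_point Xi (y - \<alpha> *\<^sub>R s y)) \<le> V y - \<alpha> * \<kappa>))"
      using key[of c0] by blast
    show "\<exists>\<delta>>0. \<exists>Ps. Ps \<noteq> {} \<and> Ps \<subseteq> {0<..} \<and>
        (\<forall>\<alpha>\<in>Ps. \<forall>y. is_traj Xi s \<alpha> y \<and> y 0 \<in> cnbhd A \<delta> \<inter> Xi \<longrightarrow> (\<forall>t. y t \<in> cnbhd A \<rho>s \<inter> Xi))"
    proof (intro exI[of _ "\<epsilon> + 1"] exI[of _ "{\<alpha>0}"] conjI allI impI ballI)
      show "\<epsilon> + 1 > 0" using e0 by simp
      show "{\<alpha>0} \<noteq> {}" by simp
      show "{\<alpha>0} \<subseteq> {0<..}" using a0 by simp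
      fix \<alpha> y t assume "\<alpha> \<in> {\<alpha>0}" and h: "is_traj Xi s \<alpha> y \<and> y 0 \<in> cnbhd A (\<epsilon> + 1) \<inter> Xi"
      then have aa: "\<alpha> = \<alpha>0" by simp
      have "V (y 0) \<le> c0" using h W Wc0 by (auto simp: cnbhd_def)
      then have "y t \<in> Xi \<and> (V (y t) \<le> c0 \<or> V (y t) \<le> c0 - real t * (\<alpha> * \<kappa>))"
        using traj[of c0 \<alpha> \<kappa> y] a0 k aa h by auto
      moreover have "c0 - real t * (\<alpha> * \<kappa>) \<le> c0" using a0 aa by simp
      ultimately have "y t \<in> Xi" "V (y t) \<le> c0" by auto
      then show "y t \<in> cnbhd A \<rho>s \<inter> Xi" using \<rho>c \<rho>s by (fastforce simp: cnbhd_def)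
    qed
  qed
  have SA: "semiglobally_practically_attractive A Xi s"
    unfolding semiglobally_practically_attractive_def
  proof (rule exI[of _ \<rho>c], rule conjI[OF \<rho>c(1)], intro allI impI)
    fix \<sigma> \<rho>a assume sr: "\<sigma> > \<rho>a \<and> \<rho>a > \<rho>c"
    obtain W\<sigma> where W\<sigma>: "\<forall>y. infdist y A \<le> \<sigma> \<longrightarrow> V y \<le> W\<sigma>" using Vbnd by blast
    define c where "c = max c0 W\<sigma>"
    obtain \<alpha>0 \<kappa> where a0: "\<alpha>0 > 0" "\<kappa> > 0" and k: "\<forall>\<alpha>. 0 < \<alpha> \<and> \<alpha> \<le> \<alpha>0 \<longrightarrow> (\<forall>y\<in>Xi. V y \<le> c \<longrightarrow>
        (infdist y A \<le> \<epsilon> \<longrightarrow> V (closest_point Xi (y - \<alpha> *\<^sub>R s y)) \<le> c0) \<and>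
        (infdist y A > \<epsilon> \<longrightarrow> V (closest_point Xi (y - \<alpha> *\<^sub>R s y)) \<le> V y - \<alpha> * \<kappa>))"
      using key[of c] by blast
    have ak: "\<alpha>0 * \<kappa> > 0" using a0 by simp
    define T where "T = nat \<lceil>c / (\<alpha>0 * \<kappa>)\<rceil> + 1"
    have Tb: "real T * (\<alpha>0 * \<kappa>) > c"
    proof -
      have "c / (\<alpha>0 * \<kappa>) \<le> real (nat \<lceil>c / (\<alpha>0 * \<kappa>)\<rceil>)" by (rule real_nat_ceiling_ge)
      then have "c / (\<alpha>0 * \<kappa>) < real T" by (simp add: T_def)
      then show ?thesis using ak by (simp add: divide_less_eq)
    qed
    show "\<exists>Pa. Pa \<noteq> {} \<and> Pa \<subseteq> {0<..} \<and> (\<forall>\<alpha>\<in>Pa. unif_attractive (cnbhd A \<rho>a) (cnbhd A \<sigma>) Xi s \<alpha>)"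
    proof (intro exI[of _ "{\<alpha>0}"] conjI ballI)
      show "{\<alpha>0} \<noteq> {}" by simp
      show "{\<alpha>0} \<subseteq> {0<..}" using a0 by simp
      fix \<alpha> assume "\<alpha> \<in> {\<alpha>0}"
      then have aa: "\<alpha> = \<alpha>0" by simp
      show "unif_attractive (cnbhd A \<rho>a) (cnbhd A \<sigma>) Xi s \<alpha>"
        unfolding unif_attractive_def
      proof (intro allI impI exI[of _ T])
        fix e :: real and y t assume e: "e > 0" "cnbhd (cnbhd A \<rho>a) e \<inter> Xi \<subseteq> cnbhd A \<sigma> \<inter> Xi"
          and h: "is_traj Xi s \<alpha> y \<and> y 0 \<in> cnbhd A \<sigma>" and tT: "T \<le> t"
        have "V (y 0) \<le> c" using h W\<sigma> by (auto simp: cnbhd_def c_def)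
        then have tr: "y t \<in> Xi \<and> (V (y t) \<le> c0 \<or> V (y t) \<le> c - real t * (\<alpha> * \<kappa>))"
          using traj[of c \<alpha> \<kappa> y] a0 k aa h by (auto simp: c_def)
        have "real T * (\<alpha>0 * \<kappa>) \<le> real t * (\<alpha>0 * \<kappa>)" using tT ak by (simp add: mult_right_mono)
        then have "c - real t * (\<alpha> * \<kappa>) < 0" using Tb aa by simp
        then have "V (y t) \<le> c0" using tr V_nonneg by (meson le_less_trans not_le)
        then have "infdist (y t) A \<le> \<rho>a" using \<rho>c sr by fastforce
        then have "y t \<in> cnbhd A \<rho>a" by (simp add: cnbhd_def)
        then have "infdist (y t) (cnbhd A \<rho>a) = 0" by simp
        then show "y t \<in> cnbhd (cnbhd A \<rho>a) e" using e by (simp add: cnbhd_def)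
      qed
    qed
  qed
  show ?thesis using PS SA by (simp add: SPAS_def)
qed

end
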